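(* For every step $h\in[H]$, every state $s\in\mathcal S$ and every $\boldsymbol\theta,\boldsymbol\theta'\in\mathbb R^d$, \[ |V^\star_h(\boldsymbol\theta,s)-V^\star_h(\boldsymbol\theta',s)|\le\sqrt d\,(H-h+1)\,\|\boldsymbol\theta-\boldsymbol\theta'\|_2 . \]
   Context: Episodic two-player zero-sum vector-valued Markov game: finite state space $\mathcal S$, finite action sets $\mathcal A,\mathcal B$, horizon $H$, transition kernels $P_h(\cdot\mid s,a,b)$, return functions $\mathbf r_h:\mathcal S\times\mathcal A\times\mathcal B\to[0,1]^d$. For $\boldsymbol\theta\in\mathbb R^d$ and policies $\mu$ (min-player) and $\nu$ (max-player), $V^{\mu,\nu}_h(\boldsymbol\theta,s)=\mathbb E_{\mu,\nu}[\sum_{l=h}^H\boldsymbol\theta\cdot\mathbf r_l(s_l,a_l,b_l)\mid s_h=s]$, and $V^\star_h(\boldsymbol\theta,s)=\min_\mu\max_\nu V^{\mu,\nu}_h(\boldsymbol\theta,s)$ is the minimax (Nash equilibrium) value of the scalarized game with reward $\boldsymbol\theta\cdot\mathbf r_h$. *)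

theory Defs
  imports "HOL-Analysis.Analysis" "HOL-Probability.Probability_Mass_Function"
begin

text \<open>Episodic two-player zero-sum vector-valued Markov game.
  Steps are 1..H.\<close>

primrec Vpol_aux ::
  "(nat \<Rightarrow> 's::finite \<Rightarrow> 'a::finite \<Rightarrow> 'b::finite \<Rightarrow> 's pmf) \<Rightarrow>
   (nat \<Rightarrow> 's \<Rightarrow> 'a \<Rightarrow> 'b \<Rightarrow> real^'d) \<Rightarrow>
   (nat \<Rightarrow> 's \<Rightarrow> 'a pmf) \<Rightarrow> (nat \<Rightarrow> 's \<Rightarrow> 'b pmf) \<Rightarrow>
   real^'d \<Rightarrow> nat \<Rightarrow> nat \<Rightarrow> 's \<Rightarrow> real" where
  "Vpol_aux P r \<mu> \<nu> \<theta> 0 h s = 0"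
| "Vpol_aux P r \<mu> \<nu> \<theta> (Suc n) h s =
     (\<Sum>a\<in>UNIV. \<Sum>b\<in>UNIV. pmf (\<mu> h s) a * pmf (\<nu> h s) b *
        (\<theta> \<bullet> r h s a b + (\<Sum>s'\<in>UNIV. pmf (P h s a b) s' * Vpol_aux P r \<mu> \<nu> \<theta> n (Suc h) s')))"

text \<open>V^{\<mu>,\<nu>}_h(\<theta>,s) = E[\<Sum>_{l=h}^H \<theta>\<bullet>r_l | s_h = s] (horizon H).\<close>
definition Vpol ::
  "(nat \<Rightarrow> 's::finite \<Rightarrow> 'a::finite \<Rightarrow> 'b::finite \<Rightarrow> 's pmf) \<Rightarrow>
   (nat \<Rightarrow> 's \<Rightarrow> 'a \<Rightarrow> 'b \<Rightarrow> real^'d) \<Rightarrow> nat \<Rightarrow>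
   (nat \<Rightarrow> 's \<Rightarrow> 'a pmf) \<Rightarrow> (nat \<Rightarrow> 's \<Rightarrow> 'b pmf) \<Rightarrow>
   nat \<Rightarrow> real^'d \<Rightarrow> 's \<Rightarrow> real" where
  "Vpol P r H \<mu> \<nu> h \<theta> s = Vpol_aux P r \<mu> \<nu> \<theta> (H + 1 - h) h s"

definition Vstar ::
  "(nat \<Rightarrow> 's::finite \<Rightarrow> 'a::finite \<Rightarrow> 'b::finite \<Rightarrow> 's pmf) \<Rightarrow>
   (nat \<Rightarrow> 's \<Rightarrow> 'a \<Rightarrow> 'b \<Rightarrow> real^'d) \<Rightarrow> nat \<Rightarrow>
   nat \<Rightarrow> real^'d \<Rightarrow> 's \<Rightarrow> real" where
  "Vstar P r H h \<theta> s =
     (INF \<mu>::nat \<Rightarrow> 's \<Rightarrow> 'a pmf. SUP \<nu>::nat \<Rightarrow> 's \<Rightarrow> 'b pmf. Vpol P r H \<mu> \<nu> h \<theta> s)"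

end

theory Submission
  imports Defs
begin

lemma norm_r_le:
  fixes x :: "real^'d"
  assumes "\<And>i. 0 \<le> x $ i \<and> x $ i \<le> 1"
  shows "norm x \<le> sqrt (real CARD('d))"
proof -
  have "(\<Sum>i\<in>UNIV. (norm (x $ i))\<^sup>2) \<le> (\<Sum>i\<in>(UNIV::'d set). 1)"
  proof (rule sum_mono)
    fix i :: 'd
    have "0 \<le> x $ i" "x $ i \<le> 1" using assms by auto
    then show "(norm (x $ i))\<^sup>2 \<le> 1" by (simp add: power_le_one)
  qed
  then show ?thesis unfolding norm_vec_def L2_set_def by simp
qed

lemma avg_bound:
  fixes w :: "'x \<Rightarrow> real"
  assumes "finite A" "\<And>i. i \<in> A \<Longrightarrow> 0 \<le> w i" "sum w A = 1"
    "\<And>i. i \<in> A \<Longrightarrow> \<bar>f i\<bar> \<le> c"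
  shows "\<bar>\<Sum>i\<in>A. w i * f i\<bar> \<le> c"
proof -
  have "\<bar>\<Sum>i\<in>A. w i * f i\<bar> \<le> (\<Sum>i\<in>A. \<bar>w i * f i\<bar>)" by (rule sum_abs)
  also have "\<dots> \<le> (\<Sum>i\<in>A. w i * c)"
    by (rule sum_mono) (simp add: abs_mult assms mult_left_mono)
  also have "\<dots> = c" using assms(3) by (simp add: sum_distrib_right[symmetric])
  finally show ?thesis .
qed

lemma pmf_sum1: "(\<Sum>x\<in>(UNIV::'x::finite set). pmf p x) = 1"
  by (rule sum_pmf_eq_1) auto

lemma Vpol_aux_lip:
  fixes P :: "nat \<Rightarrow> 's::finite \<Rightarrow> 'a::finite \<Rightarrow> 'b::finite \<Rightarrow> 's pmf"
    and r :: "nat \<Rightarrow> 's \<Rightarrow> 'a \<Rightarrow> 'b \<Rightarrow> real^'d"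
  assumes r_range: "\<And>l s a b i. 0 \<le> r l s a b $ i \<and> r l s a b $ i \<le> 1"
  shows "\<bar>Vpol_aux P r \<mu> \<nu> \<theta> n h s - Vpol_aux P r \<mu> \<nu> \<theta>' n h s\<bar>
         \<le> real n * (sqrt (real CARD('d)) * norm (\<theta> - \<theta>'))"
proof (induction n arbitrary: h s)
  case 0
  then show ?case by simp
next
  case (Suc n)
  define L where "L = sqrt (real CARD('d)) * norm (\<theta> - \<theta>')"
  define g where "g = (\<lambda>a b. (\<theta> - \<theta>') \<bullet> r h s a b + (\<Sum>s'\<in>UNIV. pmf (P h s a b) s' *
     (Vpol_aux P r \<mu> \<nu> \<theta> n (Suc h) s' - Vpol_aux P r \<mu> \<nu> \<theta>' n (Suc h) s')))"
  have eq: "Vpol_aux P r \<mu> \<nu> \<theta> (Suc n) h s - Vpol_aux P r \<mu> \<nu> \<theta>' (Suc n) h s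
      = (\<Sum>a\<in>UNIV. pmf (\<mu> h s) a * (\<Sum>b\<in>UNIV. pmf (\<nu> h s) b * g a b))"
  proof -
    have "Vpol_aux P r \<mu> \<nu> \<theta> (Suc n) h s - Vpol_aux P r \<mu> \<nu> \<theta>' (Suc n) h s
      = (\<Sum>a\<in>UNIV. (\<Sum>b\<in>UNIV. pmf (\<mu> h s) a * pmf (\<nu> h s) b *
        (\<theta> \<bullet> r h s a b + (\<Sum>s'\<in>UNIV. pmf (P h s a b) s' * Vpol_aux P r \<mu> \<nu> \<theta> n (Suc h) s'))
        - pmf (\<mu> h s) a * pmf (\<nu> h s) b *
        (\<theta>' \<bullet> r h s a b + (\<Sum>s'\<in>UNIV. pmf (P h s a b) s' * Vpol_aux P r \<mu> \<nu> \<theta>' n (Suc h) s'))))"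
      by (simp only: Vpol_aux.simps sum_subtractf)
    also have "\<dots> = (\<Sum>a\<in>UNIV. pmf (\<mu> h s) a * (\<Sum>b\<in>UNIV. pmf (\<nu> h s) b * g a b))"
      unfolding sum_distrib_left
    proof (intro sum.cong refl)
      fix a b
      have e: "(\<Sum>s'\<in>UNIV. pmf (P h s a b) s' *
     (Vpol_aux P r \<mu> \<nu> \<theta> n (Suc h) s' - Vpol_aux P r \<mu> \<nu> \<theta>' n (Suc h) s'))
        = (\<Sum>s'\<in>UNIV. pmf (P h s a b) s' * Vpol_aux P r \<mu> \<nu> \<theta> n (Suc h) s')
         - (\<Sum>s'\<in>UNIV. pmf (P h s a b) s' * Vpol_aux P r \<mu> \<nu> \<theta>' n (Suc h) s')"
        by (simp add: right_diff_distrib sum_subtractf)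
      show "pmf (\<mu> h s) a * pmf (\<nu> h s) b *
        (\<theta> \<bullet> r h s a b + (\<Sum>s'\<in>UNIV. pmf (P h s a b) s' * Vpol_aux P r \<mu> \<nu> \<theta> n (Suc h) s'))
        - pmf (\<mu> h s) a * pmf (\<nu> h s) b *
        (\<theta>' \<bullet> r h s a b + (\<Sum>s'\<in>UNIV. pmf (P h s a b) s' * Vpol_aux P r \<mu> \<nu> \<theta>' n (Suc h) s'))
        = pmf (\<mu> h s) a * (pmf (\<nu> h s) b * g a b)"
        unfolding g_def e inner_diff_left by (simp add: algebra_simps)
    qed
    finally show ?thesis .
  qed
  have gb: "\<bar>g a b\<bar> \<le> real (Suc n) * L" for a b
  proof -
    have "\<bar>(\<theta> - \<theta>') \<bullet> r h s a b\<bar> \<le> norm (\<theta> - \<theta>') * norm (r h s a b)"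
      by (rule Cauchy_Schwarz_ineq2)
    also have "\<dots> \<le> norm (\<theta> - \<theta>') * sqrt (real CARD('d))"
      using norm_r_le[of "r h s a b"] r_range by (simp add: mult_left_mono)
    finally have 1: "\<bar>(\<theta> - \<theta>') \<bullet> r h s a b\<bar> \<le> L" by (simp add: L_def mult.commute)
    have 2: "\<bar>\<Sum>s'\<in>UNIV. pmf (P h s a b) s' *
     (Vpol_aux P r \<mu> \<nu> \<theta> n (Suc h) s' - Vpol_aux P r \<mu> \<nu> \<theta>' n (Suc h) s')\<bar> \<le> real n * L"
      by (rule avg_bound) (auto simp: pmf_sum1 L_def Suc.IH)
    show ?thesis unfolding g_def using 1 2 by (simp add: algebra_simps)
  qed
  have "\<bar>\<Sum>a\<in>UNIV. pmf (\<mu> h s) a * (\<Sum>b\<in>UNIV. pmf (\<nu> h s) b * g a b)\<bar> \<le> real (Suc n) * L"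
    by (rule avg_bound) (auto simp: pmf_sum1 simp del: of_nat_Suc intro!: avg_bound gb)
  then show ?case using eq by (simp add: L_def)
qed

lemma Vpol_aux_zero: "Vpol_aux P r \<mu> \<nu> 0 n h s = 0"
  by (induction n arbitrary: h s) auto

lemma SUP_lip:
  fixes f g :: "'x \<Rightarrow> real"
  assumes "bdd_above (range f)" "bdd_above (range g)" "\<And>x. \<bar>f x - g x\<bar> \<le> L"
  shows "\<bar>(SUP x. f x) - (SUP x. g x)\<bar> \<le> L"
proof -
  have "(SUP x. f x) \<le> (SUP x. g x) + L"
  proof (rule cSUP_least)
    fix x
    have "g x \<le> (SUP x. g x)" by (rule cSUP_upper) (use assms in auto)
    then show "f x \<le> (SUP x. g x) + L" using assms(3)[of x] by linarith
  qed auto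
  moreover have "(SUP x. g x) \<le> (SUP x. f x) + L"
  proof (rule cSUP_least)
    fix x
    have "f x \<le> (SUP x. f x)" by (rule cSUP_upper) (use assms in auto)
    then show "g x \<le> (SUP x. f x) + L" using assms(3)[of x] by linarith
  qed auto
  ultimately show ?thesis by linarith
qed

lemma INF_lip:
  fixes f g :: "'x \<Rightarrow> real"
  assumes "bdd_below (range f)" "bdd_below (range g)" "\<And>x. \<bar>f x - g x\<bar> \<le> L"
  shows "\<bar>(INF x. f x) - (INF x. g x)\<bar> \<le> L"
proof -
  have "(INF x. f x) + L \<ge> (INF x. g x)"
  proof -
    have "(INF x. g x) - L \<le> (INF x. f x)"
    proof (rule cINF_greatest)
      fix x
      have "(INF x. g x) \<le> g x" by (rule cINF_lower) (use assms in auto)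
      then show "(INF x. g x) - L \<le> f x" using assms(3)[of x] by linarith
    qed auto
    then show ?thesis by linarith
  qed
  moreover have "(INF x. f x) - L \<le> (INF x. g x)"
  proof (rule cINF_greatest)
    fix x
    have "(INF x. f x) \<le> f x" by (rule cINF_lower) (use assms in auto)
    then show "(INF x. f x) - L \<le> g x" using assms(3)[of x] by linarith
  qed auto
  ultimately show ?thesis by linarith
qed

theorem lemma7:
  fixes P :: "nat \<Rightarrow> 's::finite \<Rightarrow> 'a::finite \<Rightarrow> 'b::finite \<Rightarrow> 's pmf"
    and r :: "nat \<Rightarrow> 's \<Rightarrow> 'a \<Rightarrow> 'b \<Rightarrow> real^'d"
    and H h :: nat and s :: 's and \<theta> \<theta>' :: "real^'d"
  assumes r_range: "\<And>l s a b i. 0 \<le> r l s a b $ i \<and> r l s a b $ i \<le> 1"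
    and h: "h \<in> {1..H}"
  shows "\<bar>Vstar P r H h \<theta> s - Vstar P r H h \<theta>' s\<bar>
           \<le> sqrt (real CARD('d)) * real (H - h + 1) * norm (\<theta> - \<theta>')"
proof -
  define n where "n = H + 1 - h"
  have n: "real n = real (H - h + 1)" using h by (simp add: n_def)
  define V where "V = (\<lambda>(t::real^'d) (\<mu>::nat \<Rightarrow> 's \<Rightarrow> 'a pmf) (\<nu>::nat \<Rightarrow> 's \<Rightarrow> 'b pmf). Vpol_aux P r \<mu> \<nu> t n h s)"
  have lip: "\<bar>V t \<mu> \<nu> - V t' \<mu> \<nu>\<bar> \<le> real n * (sqrt (real CARD('d)) * norm (t - t'))"
    for t t' \<mu> \<nu> unfolding V_def by (rule Vpol_aux_lip[OF r_range])
  have bnd: "\<bar>V t \<mu> \<nu>\<bar> \<le> real n * (sqrt (real CARD('d)) * norm t)" for t \<mu> \<nu>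
    using lip[where t'=0] by (simp add: V_def Vpol_aux_zero)
  define B where "B = (\<lambda>t::real^'d. real n * (sqrt (real CARD('d)) * norm t))"
  have ba: "bdd_above (range (V t \<mu>))" for t \<mu>
    by (rule bdd_aboveI[of _ "B t"]) (use bnd in \<open>auto simp: B_def abs_le_iff\<close>)
  have bb: "bdd_below (range (\<lambda>\<mu>. SUP \<nu>. V t \<mu> \<nu>))" for t
  proof (rule bdd_belowI[of _ "- B t"])
    fix x assume "x \<in> range (\<lambda>\<mu>. SUP \<nu>. V t \<mu> \<nu>)"
    then obtain \<mu> where x: "x = (SUP \<nu>. V t \<mu> \<nu>)" by auto
    have "V t \<mu> undefined \<le> x" unfolding x by (rule cSUP_upper[OF _ ba]) auto
    moreover have "- B t \<le> V t \<mu> undefined" using bnd[of t \<mu> undefined] by (simp add: B_def)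
    ultimately show "- B t \<le> x" by linarith
  qed
  have "\<bar>(INF \<mu>. SUP \<nu>. V \<theta> \<mu> \<nu>) - (INF \<mu>. SUP \<nu>. V \<theta>' \<mu> \<nu>)\<bar>
        \<le> real n * (sqrt (real CARD('d)) * norm (\<theta> - \<theta>'))"
    by (rule INF_lip[OF bb bb]) (rule SUP_lip[OF ba ba lip])
  then show ?thesis
    unfolding Vstar_def Vpol_def V_def n_def[symmetric] using n by (simp add: algebra_simps)
qed

end
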